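(* Let $(N,+,* )$ be a nilpotent ring and let $\circ$ be its adjoint operation $x\circ y=x+y+x*y$. Let $B,C$ be subgroups of $(N,\circ)$ such that every $x\in N$ can be written uniquely as $x=x_1\circ x_2$ with $x_1\in B$, $x_2\in C$, and define $x\bullet y=x_1\circ y\circ x_2$; then $(N,+,\bullet)$ is a left brace. Let $r(x,y)=(\sigma_x(y),\tau_y(x))$ be the Yang–Baxter map of $(N,+,\bullet)$ and let $X\subseteq N$ be such that $(X,r)$ is a solution of the set-theoretic Yang–Baxter equation. Let $f:X\to X$ be $\mathcal G(X,r)$-equivariant and let $g:X\to X$ satisfy $g(x)*c=c*g(x)$ for all $x\in X$, $c\in C$. Define $k_1(x)=f(x)*g(x)$ and $k_2(x)=f(x)+f(x)*g(x)$, and assume $k_1(X),k_2(X)\subseteq X$. For $i\in\{1,2\}$, if $f(x)*g(\tau_{k_i(y)}(x))=f(x)*g(\tau_y(x))$ for all $x,y\in X$, then $k_i$ is a reflection of $(X,r)$.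
   Context: A (left) brace is a triple $(B,+,\circ)$ with $(B,+)$ abelian group, $(B,\circ)$ group, and $x\circ(y+z)=x\circ y+x\circ z-x$. For a nilpotent (associative, not necessarily unital) ring, $(N,+,\circ)$ with the adjoint operation is a brace. The Yang–Baxter map of a brace $(N,+,\bullet)$ is $r(x,y)=(\sigma_x(y),\tau_y(x))$ with $\sigma_x(y)=x\bullet y-x$ and $\tau_y(x)=(\sigma_x(y))^{-1}\bullet x-(\sigma_x(y))^{-1}$, inverses taken in $(N,\bullet)$. For $X\subseteq N$, $(X,r)$ is a solution of the set-theoretic Yang–Baxter equation if $r(X\times X)\subseteq X\times X$ and $(\mathrm{id}\times r)(r\times\mathrm{id})(\mathrm{id}\times r)=(r\times\mathrm{id})(\mathrm{id}\times r)(r\times\mathrm{id})$ on $X^3$. A map $k:X\to X$ is a reflection of $(X,r)$ if $r(\mathrm{id}\times k)r(\mathrm{id}\times k)=(\mathrm{id}\times k)r(\mathrm{id}\times k)r$ as maps $X\times X\to X\times X$; $k$ is $\mathcal G(X,r)$-equivariant if $k\sigma_x=\sigma_x k$ on $X$ for every $x\in X$. *)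

theory Defs
  imports Main
begin

fun mprod :: "'a::ring list \<Rightarrow> 'a" where
  "mprod [] = 0"
| "mprod [x] = x"
| "mprod (x # y # xs) = x * mprod (y # xs)"

definition nilpotent_ring :: "'a::ring itself \<Rightarrow> bool" where
  "nilpotent_ring _ \<longleftrightarrow> (\<exists>n\<ge>1. \<forall>xs::'a list. length xs = n \<longrightarrow> mprod xs = 0)"

definition adj :: "'a::ring \<Rightarrow> 'a \<Rightarrow> 'a" where
  "adj x y = x + y + x * y"

definition adj_inv :: "'a::ring \<Rightarrow> 'a" where
  "adj_inv x = (THE y. adj x y = 0 \<and> adj y x = 0)"

definition adj_subgroup :: "'a::ring set \<Rightarrow> bool" where
  "adj_subgroup H \<longleftrightarrow> 0 \<in> H \<and> (\<forall>x\<in>H. \<forall>y\<in>H. adj x y \<in> H) \<and> (\<forall>x\<in>H. adj_inv x \<in> H)"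

definition exact_factorization :: "'a::ring set \<Rightarrow> 'a set \<Rightarrow> bool" where
  "exact_factorization B C \<longleftrightarrow> (\<forall>x. \<exists>!p. fst p \<in> B \<and> snd p \<in> C \<and> x = adj (fst p) (snd p))"

definition fact_pair :: "'a::ring set \<Rightarrow> 'a set \<Rightarrow> 'a \<Rightarrow> 'a \<times> 'a" where
  "fact_pair B C x = (THE p. fst p \<in> B \<and> snd p \<in> C \<and> x = adj (fst p) (snd p))"

definition bul :: "'a::ring set \<Rightarrow> 'a set \<Rightarrow> 'a \<Rightarrow> 'a \<Rightarrow> 'a" where
  "bul B C x y = adj (adj (fst (fact_pair B C x)) y) (snd (fact_pair B C x))"

definition bul_inv :: "'a::ring set \<Rightarrow> 'a set \<Rightarrow> 'a \<Rightarrow> 'a" where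
  "bul_inv B C x = (THE z. bul B C x z = 0 \<and> bul B C z x = 0)"

definition sig :: "'a::ring set \<Rightarrow> 'a set \<Rightarrow> 'a \<Rightarrow> 'a \<Rightarrow> 'a" where
  "sig B C x y = bul B C x y - x"

definition tau :: "'a::ring set \<Rightarrow> 'a set \<Rightarrow> 'a \<Rightarrow> 'a \<Rightarrow> 'a" where
  "tau B C y x = bul B C (bul_inv B C (sig B C x y)) x - bul_inv B C (sig B C x y)"

definition ybr :: "'a::ring set \<Rightarrow> 'a set \<Rightarrow> 'a \<times> 'a \<Rightarrow> 'a \<times> 'a" where
  "ybr B C p = (sig B C (fst p) (snd p), tau B C (snd p) (fst p))"

definition is_solution :: "('a \<times> 'a \<Rightarrow> 'a \<times> 'a) \<Rightarrow> 'a set \<Rightarrow> bool" where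
  "is_solution r X \<longleftrightarrow> r ` (X \<times> X) \<subseteq> X \<times> X \<and>
    (\<forall>x\<in>X. \<forall>y\<in>X. \<forall>z\<in>X.
       (let r12 = (\<lambda>(a,b,c). (fst (r (a,b)), snd (r (a,b)), c));
            r23 = (\<lambda>(a,b,c). (a, fst (r (b,c)), snd (r (b,c))))
        in r23 (r12 (r23 (x,y,z))) = r12 (r23 (r12 (x,y,z)))))"

definition is_reflection :: "('a \<times> 'a \<Rightarrow> 'a \<times> 'a) \<Rightarrow> 'a set \<Rightarrow> ('a \<Rightarrow> 'a) \<Rightarrow> bool" where
  "is_reflection r X k \<longleftrightarrow>
    (\<forall>x\<in>X. \<forall>y\<in>X. let idk = (\<lambda>(a,b). (a, k b)) in
       r (idk (r (idk (x,y)))) = idk (r (idk (r (x,y)))))"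

end

theory Submission
  imports Defs
begin

definition Lf :: "'a::ring \<Rightarrow> 'a \<Rightarrow> 'a \<Rightarrow> 'a" where
  "Lf a c w = w + a*w + w*c + a*w*c"

lemma Lf_comp: "Lf a c (Lf a' c' w) = Lf (adj a a') (adj c' c) w"
  by (simp add: Lf_def adj_def algebra_simps)

lemma Lf_0: "Lf 0 0 w = w"
  by (simp add: Lf_def)

lemma Lf_add: "Lf a c (p + q) = Lf a c p + Lf a c q"
  by (simp add: Lf_def algebra_simps)

lemma Lf_mult: "q*c = c*q \<Longrightarrow> Lf a c (p*q) = Lf a c p * q"
  by (simp add: Lf_def algebra_simps)

lemma adj_assoc: "adj (adj a b) c = adj a (adj b (c::'a::ring))"
  by (simp add: adj_def algebra_simps)

lemma adj_0l[simp]: "adj 0 x = x" and adj_0r[simp]: "adj x 0 = x"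
  by (simp_all add: adj_def)

fun sq :: "'a::ring \<Rightarrow> nat \<Rightarrow> 'a" where
  "sq x 0 = 0"
| "sq x (Suc m) = - x - x * sq x m"

lemma sq_comm: "x * sq x m = sq x m * x"
proof (induction m)
  case (Suc m)
  have "x * (x * sq x m) = x * (sq x m * x)" using Suc by simp
  then show ?case by (simp add: algebra_simps)
qed simp

lemma sq_err: "adj x (sq x m) = mprod (replicate (Suc m) x) \<or> adj x (sq x m) = - mprod (replicate (Suc m) x)"
proof (induction m)
  case 0
  then show ?case by (simp add: adj_def)
next
  case (Suc m)
  have e: "adj x (sq x (Suc m)) = - (x * adj x (sq x m))"
    by (simp add: adj_def algebra_simps)
  have r: "mprod (replicate (Suc (Suc m)) x) = x * mprod (replicate (Suc m) x)"
    by simp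
  from Suc show ?case unfolding e r by auto
qed

lemma adj_inv_ex:
  assumes nil: "nilpotent_ring TYPE('a::ring)"
  shows "\<exists>y. adj (x::'a) y = 0 \<and> adj y x = 0"
proof -
  obtain n where n: "n \<ge> 1" "\<forall>xs::'a list. length xs = n \<longrightarrow> mprod xs = 0"
    using nil unfolding nilpotent_ring_def by blast
  have "mprod (replicate (Suc (n-1)) x) = 0" using n by simp
  then have "adj x (sq x (n-1)) = 0" using sq_err[of x "n-1"] by auto
  moreover have "adj (sq x (n-1)) x = adj x (sq x (n-1))"
    using sq_comm[of x "n-1"] by (simp add: adj_def algebra_simps)
  ultimately show ?thesis by auto
qed

lemma adj_inv_prop:
  assumes nil: "nilpotent_ring TYPE('a::ring)"
  shows "adj (x::'a) (adj_inv x) = 0 \<and> adj (adj_inv x) x = 0"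
proof -
  have "\<exists>!y. adj x y = 0 \<and> adj y x = 0"
  proof -
    obtain y where y: "adj x y = 0 \<and> adj y x = 0" using adj_inv_ex[OF nil] by blast
    moreover have "y' = y" if "adj x y' = 0 \<and> adj y' x = 0" for y'
    proof -
      have "y' = adj (adj y x) y'" using y by simp
      also have "\<dots> = adj y (adj x y')" by (simp add: adj_assoc)
      also have "\<dots> = y" using that by simp
      finally show ?thesis .
    qed
    ultimately show ?thesis by blast
  qed
  then show ?thesis unfolding adj_inv_def by (rule theI')
qed

locale fsetup =
  fixes B C :: "'a::ring set"
  assumes nil: "nilpotent_ring TYPE('a)" and subB: "adj_subgroup B" and subC: "adj_subgroup C"
    and fact: "exact_factorization B C"
begin

lemma ai1[simp]: "adj (x::'a) (adj_inv x) = 0"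
  using adj_inv_prop[OF nil] by blast
lemma ai2[simp]: "adj (adj_inv (x::'a)) x = 0"
  using adj_inv_prop[OF nil] by blast

lemma ai3[simp]: "adj (x::'a) (adj (adj_inv x) y) = y" and ai4[simp]: "adj (adj_inv x) (adj x y) = y"
  by (simp_all flip: adj_assoc)

lemma fp: "fst (fact_pair B C x) \<in> B \<and> snd (fact_pair B C x) \<in> C
   \<and> x = adj (fst (fact_pair B C x)) (snd (fact_pair B C x))"
  using theI'[OF fact[unfolded exact_factorization_def, rule_format, of x]]
  unfolding fact_pair_def by blast

lemma fp_uniq: "b\<in>B \<Longrightarrow> c\<in>C \<Longrightarrow> fact_pair B C (adj b c) = (b,c)"
  unfolding fact_pair_def
  by (rule the1_equality[OF fact[unfolded exact_factorization_def, rule_format]]) auto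

lemma sig_eq: "sig B C v w = Lf (fst (fact_pair B C v)) (snd (fact_pair B C v)) w"
proof -
  obtain a c where ac: "fact_pair B C v = (a,c)" by (cases "fact_pair B C v")
  have v: "v = adj a c" using fp[of v] ac by simp
  have "sig B C v w = adj (adj a w) c - v" unfolding sig_def bul_def ac by simp
  also have "\<dots> = adj (adj a w) c - adj a c" using v by simp
  finally show ?thesis by (simp add: ac Lf_def adj_def algebra_simps)
qed

lemma bul_inv_eq: "bul_inv B C v = adj (adj_inv (fst (fact_pair B C v))) (adj_inv (snd (fact_pair B C v)))"
proof -
  obtain a c where ac: "fact_pair B C v = (a,c)" by (cases "fact_pair B C v")
  have v: "v = adj a c" and aB: "a \<in> B" and cC: "c \<in> C" using fp[of v] ac by auto
  define w where "w = adj (adj_inv a) (adj_inv c)"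
  have wB: "adj_inv a \<in> B" using subB aB unfolding adj_subgroup_def by auto
  have wC: "adj_inv c \<in> C" using subC cC unfolding adj_subgroup_def by auto
  have fw: "fact_pair B C w = (adj_inv a, adj_inv c)" unfolding w_def using fp_uniq wB wC by blast
  have "bul_inv B C v = w" unfolding bul_inv_def
  proof (rule the_equality)
    show "bul B C v w = 0 \<and> bul B C w v = 0"
      unfolding bul_def ac fw by (simp add: adj_assoc w_def v)
  next
    fix z assume "bul B C v z = 0 \<and> bul B C z v = 0"
    then have "adj (adj a z) c = 0" unfolding bul_def ac by simp
    then have "adj (adj (adj a z) c) (adj_inv c) = adj_inv c" by simp
    then have "adj a z = adj_inv c" by (simp add: adj_assoc)
    then have "adj (adj_inv a) (adj a z) = adj (adj_inv a) (adj_inv c)" by simp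
    then show "z = w" unfolding w_def by simp
  qed
  then show ?thesis using ac w_def by simp
qed

lemma fp_bul_inv: "fact_pair B C (bul_inv B C v) = (adj_inv (fst (fact_pair B C v)), adj_inv (snd (fact_pair B C v)))"
proof -
  have "adj_inv (fst (fact_pair B C v)) \<in> B" using subB fp[of v] unfolding adj_subgroup_def by auto
  moreover have "adj_inv (snd (fact_pair B C v)) \<in> C" using subC fp[of v] unfolding adj_subgroup_def by auto
  ultimately show ?thesis unfolding bul_inv_eq using fp_uniq by blast
qed

lemma sig_inv1: "sig B C v (sig B C (bul_inv B C v) z) = z"
  unfolding sig_eq[of v] sig_eq[of "bul_inv B C v"] fp_bul_inv Lf_comp by (simp add: Lf_0)

lemma sig_inv2: "sig B C (bul_inv B C v) (sig B C v z) = z"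
  unfolding sig_eq[of v] sig_eq[of "bul_inv B C v"] fp_bul_inv Lf_comp by (simp add: Lf_0)

lemma sig_mult: "\<forall>c\<in>C. q*c = c*q \<Longrightarrow> sig B C v (p*q) = sig B C v p * q"
  unfolding sig_eq using fp[of v] Lf_mult by blast

lemma sig_add: "sig B C v (p+q) = sig B C v p + sig B C v q"
  unfolding sig_eq Lf_add ..

lemma tau_eq: "tau B C y x = sig B C (bul_inv B C (sig B C x y)) x"
  unfolding tau_def sig_def ..

lemma I1: "sig B C (sig B C x w) (tau B C w x) = x"
  unfolding tau_eq sig_inv1 ..

lemma I2: "tau B C (tau B C y x) (sig B C x y) = y"
  unfolding tau_eq[of "tau B C y x"] I1 sig_inv2 ..


lemma refl_generic:
  fixes X :: "'a set" and f g K :: "'a \<Rightarrow> 'a" and \<Phi> :: "'a \<Rightarrow> 'a \<Rightarrow> 'a"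
  assumes sol: "is_solution (ybr B C) X"
    and fX: "\<forall>x\<in>X. f x \<in> X"
    and f_equiv: "\<forall>x\<in>X. \<forall>y\<in>X. f (sig B C x y) = sig B C x (f y)"
    and g_comm: "\<forall>x\<in>X. \<forall>c\<in>C. g x * c = c * g x"
    and KX: "\<forall>x\<in>X. K x \<in> X"
    and Kdef: "\<forall>w. K w = \<Phi> (f w) (g w)"
    and P1: "\<forall>v p q. (\<forall>c\<in>C. q*c = c*q) \<longrightarrow> sig B C v (\<Phi> p q) = \<Phi> (sig B C v p) q"
    and P2: "\<forall>p q q'. p*q = p*q' \<longrightarrow> \<Phi> p q = \<Phi> p q'"
    and hyp: "\<forall>x\<in>X. \<forall>y\<in>X. f x * g (tau B C (K y) x) = f x * g (tau B C y x)"
  shows "is_reflection (ybr B C) X K"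
proof -
  have closed: "sig B C p q \<in> X \<and> tau B C q p \<in> X" if "p \<in> X" "q \<in> X" for p q
  proof -
    have "ybr B C (p,q) \<in> X \<times> X" using sol that unfolding is_solution_def by blast
    then show ?thesis unfolding ybr_def by simp
  qed
  show ?thesis unfolding is_reflection_def Let_def
  proof (intro ballI)
    fix x y assume x: "x \<in> X" and y: "y \<in> X"
    define s where "s = sig B C x y"
    define t where "t = tau B C y x"
    define s1 where "s1 = sig B C x (K y)"
    define t1 where "t1 = tau B C (K y) x"
    have Ky: "K y \<in> X" using KX y by blast
    have s: "s \<in> X" and t: "t \<in> X" using closed[OF x y] s_def t_def by auto
    have s1: "s1 \<in> X" and t1: "t1 \<in> X" using closed[OF x Ky] s1_def t1_def by auto
    have Kt: "K t \<in> X" using KX t by blast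
    have Kt1: "K t1 \<in> X" using KX t1 by blast
    define a where "a = sig B C s (K t)"
    have aX: "a \<in> X" using closed[OF s Kt] a_def by auto
    have "sig B C s1 (K t1) = \<Phi> (sig B C s1 (f t1)) (g t1)"
      using Kdef P1 g_comm t1 by auto
    also have "\<dots> = \<Phi> (f x) (g t1)"
      using f_equiv s1 t1 I1 s1_def t1_def by metis
    finally have ea1: "sig B C s1 (K t1) = \<Phi> (f x) (g t1)" .
    have "a = \<Phi> (sig B C s (f t)) (g t)"
      using Kdef P1 g_comm t a_def by auto
    also have "\<dots> = \<Phi> (f x) (g t)"
      using f_equiv s t I1 s_def t_def by metis
    finally have ea2: "a = \<Phi> (f x) (g t)" .
    have ea: "sig B C s1 (K t1) = a"
      using ea1 ea2 P2 hyp x y t_def t1_def by metis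
    define D where "D = sig B C (bul_inv B C a)"
    define b0 where "b0 = tau B C (K t) s"
    have b0D: "b0 = D s" unfolding b0_def D_def tau_eq a_def ..
    have b0X: "b0 \<in> X" using closed[OF s Kt] b0_def by auto
    have bD: "tau B C (K t1) s1 = D s1" unfolding D_def tau_eq ea ..
    have s1e: "s1 = \<Phi> (f s) (g y)"
      unfolding s1_def s_def using Kdef P1 g_comm y f_equiv x by auto
    have "f s = f (sig B C a b0)" using sig_inv1 b0D D_def by simp
    also have "\<dots> = sig B C a (f b0)" using f_equiv aX b0X by blast
    finally have Dfs: "D (f s) = f b0" unfolding D_def using sig_inv2 by simp
    have bE: "D s1 = \<Phi> (f b0) (g y)"
      unfolding s1e D_def using P1 g_comm y Dfs D_def by auto
    have ty: "tau B C t s = y" unfolding s_def t_def I2 ..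
    have h: "f s * g b0 = f s * g y" using hyp s t ty b0_def by metis
    have "f b0 * g b0 = D (f s * g b0)" using sig_mult g_comm b0X Dfs D_def by metis
    also have "\<dots> = D (f s * g y)" using h by simp
    also have "\<dots> = f b0 * g y" using sig_mult g_comm y Dfs D_def by metis
    finally have "f b0 * g y = f b0 * g b0" by simp
    then have bb: "\<Phi> (f b0) (g y) = K b0" using P2 Kdef by metis
    show "ybr B C (case ybr B C (case (x, y) of (a, b) \<Rightarrow> (a, K b)) of (a, b) \<Rightarrow> (a, K b)) =
          (case ybr B C (case ybr B C (x, y) of (a, b) \<Rightarrow> (a, K b)) of (a, b) \<Rightarrow> (a, K b))"
      unfolding ybr_def using ea bD bE bb
      by (simp add: s_def t_def s1_def t1_def a_def b0_def)
  qed
qed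

end

theorem mainTheorem6:
  fixes B C X :: "'a::ring set" and f g :: "'a \<Rightarrow> 'a"
  assumes nil: "nilpotent_ring TYPE('a)"
    and subB: "adj_subgroup B" and subC: "adj_subgroup C"
    and fact: "exact_factorization B C"
    and sol: "is_solution (ybr B C) X"
    and fX: "\<forall>x\<in>X. f x \<in> X"
    and f_equiv: "\<forall>x\<in>X. \<forall>y\<in>X. f (sig B C x y) = sig B C x (f y)"
    and gX: "\<forall>x\<in>X. g x \<in> X"
    and g_comm: "\<forall>x\<in>X. \<forall>c\<in>C. g x * c = c * g x"
    and k1X: "\<forall>x\<in>X. f x * g x \<in> X"
    and k2X: "\<forall>x\<in>X. f x + f x * g x \<in> X"
  shows "((\<forall>x\<in>X. \<forall>y\<in>X. f x * g (tau B C (f y * g y) x) = f x * g (tau B C y x))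
            \<longrightarrow> is_reflection (ybr B C) X (\<lambda>x. f x * g x))
       \<and> ((\<forall>x\<in>X. \<forall>y\<in>X. f x * g (tau B C (f y + f y * g y) x) = f x * g (tau B C y x))
            \<longrightarrow> is_reflection (ybr B C) X (\<lambda>x. f x + f x * g x))"
proof -
  interpret S: fsetup B C using nil subB subC fact by unfold_locales
  show ?thesis
  proof (intro conjI impI)
    assume h: "\<forall>x\<in>X. \<forall>y\<in>X. f x * g (tau B C (f y * g y) x) = f x * g (tau B C y x)"
    show "is_reflection (ybr B C) X (\<lambda>x. f x * g x)"
      by (rule S.refl_generic[where \<Phi>="\<lambda>p q. p * q"])
        (use sol fX f_equiv g_comm k1X h S.sig_mult in auto)
  next
    assume h: "\<forall>x\<in>X. \<forall>y\<in>X. f x * g (tau B C (f y + f y * g y) x) = f x * g (tau B C y x)"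
    show "is_reflection (ybr B C) X (\<lambda>x. f x + f x * g x)"
      by (rule S.refl_generic[where \<Phi>="\<lambda>p q. p + p * q"])
        (use sol fX f_equiv g_comm k2X h S.sig_mult S.sig_add in auto)
  qed
qed

end
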